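(* Let $K$ be a field, $q\in K[x_1]\setminus K$, and let $F=\{f_1,\dots,f_s\}\subset R_q[\tilde{\bm{x}}]\setminus R_q$. For every $f\in R_q[\tilde{\bm{x}}]$ there exist a multiplier $\lambda\in R_q^\times$, a remainder $r\in R_q[\tilde{\bm{x}}]$ that is properly reduced with respect to $F$, and quotients $h_1,\dots,h_s\in R_q[\tilde{\bm{x}}]$ such that $$\lambda f=\sum_{j=1}^s h_jf_j+r$$ and $$\operatorname{lm}(f)=\max\Bigl\{\max_{1\le j\le s}\{\operatorname{lm}(h_j)\cdot\operatorname{lm}(f_j)\},\ \operatorname{lm}(r)\Bigr\}.$$
   Context: $R_q:=\{r\in K[x_1]:\deg r<\deg q\}$ with addition and multiplication modulo $q$, so $R_q\cong K[x_1]/(q)$; $R_q^\times$ is its group of units, $R_q^\ast=R_q\setminus\{0\}$. $\sigma_q:K[x_1]\to R_q$ sends $f$ to its remainder modulo $q$, and $\iota_q:R_q\hookrightarrow K[x_1]$ is the inclusion; both are extended coefficientwise to polynomials in $\tilde{\bm{x}}=(x_2,\dots,x_n)$. A monomial ordering $\succ$ on monomials in $\tilde{\bm{x}}$ is fixed; for nonzero $f\in R_q[\tilde{\bm{x}}]$, $\operatorname{lm}(f)$ is the $\succ$-largest monomial with nonzero coefficient and $\operatorname{lc}(f)$ that coefficient. Gcds in $K[x_1]$ are monic, $\operatorname{lcm}(a,b)=ab/\gcd(a,b)$. A nonzero term $c_\alpha\tilde{\bm{x}}^\alpha$ of a polynomial in $R_q[\tilde{\bm{x}}]$ is properly reducible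 with respect to $F$ if there is $f_j\in F$ with $\operatorname{lm}(f_j)\mid\tilde{\bm{x}}^\alpha$ such that the interim multiplier $\mu:=\sigma_q\bigl(\operatorname{lcm}(l_\alpha,l_j)/l_\alpha\bigr)$ lies in $R_q^\times$, where $l_\alpha=\iota_q(c_\alpha)$, $l_j=\iota_q(\operatorname{lc}(f_j))$. A polynomial is properly reduced with respect to $F$ if none of its terms is properly reducible (in particular $0$ is properly reduced). *)

theory Defs
  imports "HOL-Library.Poly_Mapping" "HOL-Computational_Algebra.Polynomial_Factorial"
begin

text \<open>Monomials in the variables x_2..x_n are exponent vectors of type 'v =>0 nat,
  with 'v a finite (nonempty) type of variables.  A polynomial in R_q[x~] is a finitely
  supported map from monomials to coefficients in K[x_1] (type 'a poly), each coefficient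
  being reduced modulo q (degree < degree q).\<close>

type_synonym ('v, 'a) mpoly = "('v \<Rightarrow>\<^sub>0 nat) \<Rightarrow>\<^sub>0 'a poly"

definition monomial_order :: "(('v \<Rightarrow>\<^sub>0 nat) \<Rightarrow> ('v \<Rightarrow>\<^sub>0 nat) \<Rightarrow> bool) \<Rightarrow> bool" where
  "monomial_order le \<longleftrightarrow>
     (\<forall>a. le a a) \<and> (\<forall>a b. le a b \<and> le b a \<longrightarrow> a = b) \<and>
     (\<forall>a b c. le a b \<and> le b c \<longrightarrow> le a c) \<and> (\<forall>a b. le a b \<or> le b a) \<and>
     (\<forall>a b c. le a b \<longrightarrow> le (a + c) (b + c)) \<and>
     wfP (\<lambda>a b. le a b \<and> a \<noteq> b)"

text \<open>Elements of R_q: polynomials r in K[x_1] with deg r < deg q, i.e. r mod q = r.\<close>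
definition in_Rq :: "'a::field_gcd poly \<Rightarrow> 'a poly \<Rightarrow> bool" where
  "in_Rq q r \<longleftrightarrow> r mod q = r"

definition Rq_unit :: "'a::field_gcd poly \<Rightarrow> 'a poly \<Rightarrow> bool" where
  "Rq_unit q u \<longleftrightarrow> in_Rq q u \<and> (\<exists>v. in_Rq q v \<and> (u * v) mod q = 1)"

definition sigma_q :: "'a::field_gcd poly \<Rightarrow> ('v, 'a) mpoly \<Rightarrow> ('v, 'a) mpoly" where
  "sigma_q q f = Poly_Mapping.map (\<lambda>c. c mod q) f"

definition in_Rq_poly :: "'a::field_gcd poly \<Rightarrow> ('v, 'a) mpoly \<Rightarrow> bool" where
  "in_Rq_poly q f \<longleftrightarrow> (\<forall>\<alpha>. in_Rq q (Poly_Mapping.lookup f \<alpha>))"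

definition Rq_mult :: "'a::field_gcd poly \<Rightarrow> ('v, 'a) mpoly \<Rightarrow> ('v, 'a) mpoly \<Rightarrow> ('v, 'a) mpoly" where
  "Rq_mult q f g = sigma_q q (f * g)"

definition Rq_add :: "'a::field_gcd poly \<Rightarrow> ('v, 'a) mpoly \<Rightarrow> ('v, 'a) mpoly \<Rightarrow> ('v, 'a) mpoly" where
  "Rq_add q f g = sigma_q q (f + g)"

definition Rq_scale :: "'a::field_gcd poly \<Rightarrow> 'a poly \<Rightarrow> ('v, 'a) mpoly \<Rightarrow> ('v, 'a) mpoly" where
  "Rq_scale q c f = sigma_q q (Poly_Mapping.map (\<lambda>d. c * d) f)"

definition lm :: "(('v \<Rightarrow>\<^sub>0 nat) \<Rightarrow> ('v \<Rightarrow>\<^sub>0 nat) \<Rightarrow> bool) \<Rightarrow> ('v, 'a::field_gcd) mpoly \<Rightarrow> ('v \<Rightarrow>\<^sub>0 nat)"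
  where "lm le f = (THE \<alpha>. \<alpha> \<in> Poly_Mapping.keys f \<and> (\<forall>\<beta>\<in>Poly_Mapping.keys f. le \<beta> \<alpha>))"

definition lc :: "(('v \<Rightarrow>\<^sub>0 nat) \<Rightarrow> ('v \<Rightarrow>\<^sub>0 nat) \<Rightarrow> bool) \<Rightarrow> ('v, 'a::field_gcd) mpoly \<Rightarrow> 'a poly"
  where "lc le f = Poly_Mapping.lookup f (lm le f)"

text \<open>lcm as in the paper: lcm(a,b) = ab / gcd(a,b), with gcd monic (Isabelle's gcd on K[x]).\<close>
definition lcm_paper :: "'a::field_gcd poly \<Rightarrow> 'a poly \<Rightarrow> 'a poly" where
  "lcm_paper a b = (a * b) div gcd a b"

definition mon_dvd :: "('v \<Rightarrow>\<^sub>0 nat) \<Rightarrow> ('v \<Rightarrow>\<^sub>0 nat) \<Rightarrow> bool" where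
  "mon_dvd \<beta> \<alpha> \<longleftrightarrow> (\<exists>\<gamma>. \<alpha> = \<beta> + \<gamma>)"

definition properly_reducible_term ::
  "'a::field_gcd poly \<Rightarrow> (('v \<Rightarrow>\<^sub>0 nat) \<Rightarrow> ('v \<Rightarrow>\<^sub>0 nat) \<Rightarrow> bool) \<Rightarrow> ('v, 'a) mpoly list
     \<Rightarrow> ('v, 'a) mpoly \<Rightarrow> ('v \<Rightarrow>\<^sub>0 nat) \<Rightarrow> bool" where
  "properly_reducible_term q le F g \<alpha> \<longleftrightarrow>
     Poly_Mapping.lookup g \<alpha> \<noteq> 0 \<and>
     (\<exists>fj \<in> set F. mon_dvd (lm le fj) \<alpha> \<and>
        Rq_unit q ((lcm_paper (Poly_Mapping.lookup g \<alpha>) (lc le fj) div Poly_Mapping.lookup g \<alpha>) mod q))"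

definition properly_reduced ::
  "'a::field_gcd poly \<Rightarrow> (('v \<Rightarrow>\<^sub>0 nat) \<Rightarrow> ('v \<Rightarrow>\<^sub>0 nat) \<Rightarrow> bool) \<Rightarrow> ('v, 'a) mpoly list
     \<Rightarrow> ('v, 'a) mpoly \<Rightarrow> bool" where
  "properly_reduced q le F g \<longleftrightarrow> (\<forall>\<alpha>. \<not> properly_reducible_term q le F g \<alpha>)"

end

theory Submission
  imports Defs
begin
lemma sigma_lookup: "Poly_Mapping.lookup (sigma_q q f) a = Poly_Mapping.lookup f a mod q"
  by (simp add: sigma_q_def map.rep_eq when_def)

lemma lookup_single_mult:
  fixes p :: "('v \<Rightarrow>\<^sub>0 nat) \<Rightarrow>\<^sub>0 'b::comm_semiring_1"
  shows "Poly_Mapping.lookup (Poly_Mapping.single g t * p) (g + b) = t * Poly_Mapping.lookup p b"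
proof -
  have "Poly_Mapping.lookup (Poly_Mapping.single g t * p) (g + b)
     = (Sum_any (\<lambda>l. (t * (Sum_any (\<lambda>q. Poly_Mapping.lookup p q when g + b = l + q)) when g = l)))"
    by (simp add: lookup_mult lookup_single when_mult)
  also have "\<dots> = t * (Sum_any (\<lambda>q. Poly_Mapping.lookup p q when g + b = g + q))"
    by (simp add: when_def)
  also have "(\<lambda>q. Poly_Mapping.lookup p q when g + b = g + q) = (\<lambda>q. if b = q then Poly_Mapping.lookup p q else 0)"
    by (auto simp: when_def fun_eq_iff)
  finally show ?thesis by simp
qed

lemma mo_props:
  assumes "monomial_order le"
  shows "le a a" "le a b \<Longrightarrow> le b a \<Longrightarrow> a = b" "le a b \<Longrightarrow> le b c \<Longrightarrow> le a c"
    "le a b \<or> le b a" "le a b \<Longrightarrow> le (a + c) (b + c)" "le a b \<Longrightarrow> le (c + a) (c + b)"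
    "wfP (\<lambda>a b. le a b \<and> a \<noteq> b)"
proof -
  note m = assms[unfolded monomial_order_def]
  show "le a a" using m by blast
  show "le a b \<Longrightarrow> le b a \<Longrightarrow> a = b" using m by blast
  show "le a b \<Longrightarrow> le b c \<Longrightarrow> le a c" using m by blast
  show "le a b \<or> le b a" using m by blast
  show "le a b \<Longrightarrow> le (a + c) (b + c)" using m by blast
  show "le a b \<Longrightarrow> le (c + a) (c + b)" using m by (metis add.commute)
  show "wfP (\<lambda>a b. le a b \<and> a \<noteq> b)" using m by blast
qed

lemma finite_max:
  assumes "monomial_order le" "finite A" "A \<noteq> {}"
  shows "\<exists>a\<in>A. \<forall>b\<in>A. le b a"
  using assms(2,3)
proof (induction A rule: finite_ne_induct)
  case (singleton x) then show ?case using mo_props(1)[OF assms(1)] by auto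
next
  case (insert x F)
  then obtain a where "a \<in> F" "\<forall>b\<in>F. le b a" by auto
  then show ?case
  proof (cases "le x a")
    case True then show ?thesis using \<open>a \<in> F\<close> \<open>\<forall>b\<in>F. le b a\<close> mo_props(1)[OF assms(1)] by auto
  next
    case False then have "le a x" using mo_props(4)[OF assms(1)] by blast
    then show ?thesis using \<open>\<forall>b\<in>F. le b a\<close> mo_props(1,3)[OF assms(1)] by blast
  qed
qed

lemma lm_props:
  assumes "monomial_order le" "g \<noteq> 0"
  shows "lm le g \<in> Poly_Mapping.keys g" "\<forall>b\<in>Poly_Mapping.keys g. le b (lm le g)"
proof -
  obtain a where a: "a \<in> Poly_Mapping.keys g" "\<forall>b\<in>Poly_Mapping.keys g. le b a"
    using finite_max[OF assms(1), of "Poly_Mapping.keys g"] assms(2) by auto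
  have "lm le g = a" unfolding lm_def
    apply (rule the_equality) using a apply blast using a mo_props(2)[OF assms(1)] by blast
  then show "lm le g \<in> Poly_Mapping.keys g" "\<forall>b\<in>Poly_Mapping.keys g. le b (lm le g)" using a by auto
qed

lemma lm_eqI:
  assumes "monomial_order le" "a \<in> Poly_Mapping.keys g" "\<forall>b\<in>Poly_Mapping.keys g. le b a"
  shows "lm le g = a"
  unfolding lm_def
  apply (rule the_equality) using assms(2,3) apply blast using assms(2,3) mo_props(2)[OF assms(1)] by blast

lemma prt_cong:
  "Poly_Mapping.lookup g a = Poly_Mapping.lookup g' a \<Longrightarrow>
   properly_reducible_term q le F g a = properly_reducible_term q le F g' a"
  by (simp add: properly_reducible_term_def)

lemma reduced_zero: "properly_reduced q le F 0"
  by (simp add: properly_reduced_def properly_reducible_term_def)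

lemma sum_upd:
  fixes f :: "nat \<Rightarrow> 'b::comm_monoid_add"
  assumes "j < n" "\<And>i. i \<noteq> j \<Longrightarrow> f' i = f i" "f' j = f j + d"
  shows "(\<Sum>i<n. f' i) = (\<Sum>i<n. f i) + d"
proof -
  have j: "j \<in> {..<n}" using assms(1) by simp
  have "(\<Sum>i<n. f' i) = f' j + (\<Sum>i\<in>{..<n} - {j}. f' i)" by (rule sum.remove[OF _ j]) simp
  also have "(\<Sum>i\<in>{..<n} - {j}. f' i) = (\<Sum>i\<in>{..<n} - {j}. f i)" using assms(2) by (intro sum.cong) auto
  also have "(\<Sum>i<n. f i) = f j + (\<Sum>i\<in>{..<n} - {j}. f i)" by (rule sum.remove[OF _ j]) simp
  ultimately show ?thesis using assms(3) by (simp add: algebra_simps)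
qed

definition Qinv where
  "Qinv q le F g H r \<longleftrightarrow> (\<forall>j. in_Rq_poly q (H j)) \<and> in_Rq_poly q r \<and> properly_reduced q le F r \<and>
    (\<forall>\<beta>. Poly_Mapping.lookup g \<beta> =
       ((\<Sum>j<length F. Poly_Mapping.lookup (H j * F!j) \<beta>) + Poly_Mapping.lookup r \<beta>) mod q)"

lemma main:
  fixes q :: "'a::field_gcd poly" and F :: "('v, 'a) mpoly list"
  assumes mo: "monomial_order le" and dq: "degree q > 0"
    and FF: "\<forall>fj\<in>set F. in_Rq_poly q fj \<and> fj \<noteq> 0"
  shows "\<forall>g. lm le g = m \<longrightarrow> in_Rq_poly q g \<longrightarrow> g \<noteq> 0 \<longrightarrow> (\<exists>H r. Qinv q le F g H r \<and>
    (\<forall>j<length F. \<forall>\<beta>\<in>Poly_Mapping.keys (H j). le (\<beta> + lm le (F!j)) (lm le g)) \<and>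
    (\<forall>\<beta>\<in>Poly_Mapping.keys r. le \<beta> (lm le g)) \<and>
    lm le g \<in> {lm le (H j) + lm le (F!j) | j. j < length F \<and> H j \<noteq> 0} \<union> (if r = 0 then {} else {lm le r}))"
proof (induction m rule: wfp_induct_rule[OF mo_props(7)[OF mo]])
  case (1 m)
  show ?case
  proof (intro allI impI)
    fix g :: "('v, 'a) mpoly"
    assume gm: "lm le g = m" and gq: "in_Rq_poly q g" and g0: "g \<noteq> 0"
    define \<alpha> where "\<alpha> = lm le g"
    define c where "c = Poly_Mapping.lookup g \<alpha>"
    have \<alpha>k: "\<alpha> \<in> Poly_Mapping.keys g" and gle: "\<forall>b\<in>Poly_Mapping.keys g. le b \<alpha>"
      using lm_props[OF mo g0] \<alpha>_def by auto
    have c0: "c \<noteq> 0" using \<alpha>k c_def by (simp add: in_keys_iff)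
    have cq: "c mod q = c" using gq c_def by (simp add: in_Rq_poly_def in_Rq_def)
    have sub: "\<exists>H r. Qinv q le F g' H r \<and>
        (\<forall>j<length F. \<forall>\<beta>\<in>Poly_Mapping.keys (H j). le (\<beta> + lm le (F!j)) \<alpha> \<and> \<beta> + lm le (F!j) \<noteq> \<alpha>) \<and>
        (\<forall>\<beta>\<in>Poly_Mapping.keys r. le \<beta> \<alpha> \<and> \<beta> \<noteq> \<alpha>)"
      if g'q: "in_Rq_poly q g'" and g'k: "\<forall>\<beta>\<in>Poly_Mapping.keys g'. le \<beta> \<alpha> \<and> \<beta> \<noteq> \<alpha>" for g'
    proof (cases "g' = 0")
      case True
      show ?thesis
        apply (rule exI[of _ "\<lambda>_. 0"], rule exI[of _ 0])
        using True reduced_zero by (simp add: Qinv_def in_Rq_poly_def in_Rq_def)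
    next
      case False
      have lk: "lm le g' \<in> Poly_Mapping.keys g'" "\<forall>b\<in>Poly_Mapping.keys g'. le b (lm le g')"
        using lm_props[OF mo False] by auto
      then have lt: "le (lm le g') m \<and> lm le g' \<noteq> m" using g'k gm \<alpha>_def by auto
      from "1"[OF lt, rule_format, OF refl g'q False] obtain H r where
        HR: "Qinv q le F g' H r"
          "\<forall>j<length F. \<forall>\<beta>\<in>Poly_Mapping.keys (H j). le (\<beta> + lm le (F!j)) (lm le g')"
          "\<forall>\<beta>\<in>Poly_Mapping.keys r. le \<beta> (lm le g')" by blast
      have strict: "le x \<alpha> \<and> x \<noteq> \<alpha>" if "le x (lm le g')" for x
      proof
        show "le x \<alpha>" using that lt gm \<alpha>_def mo_props(3)[OF mo] by blast
        show "x \<noteq> \<alpha>"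
        proof
          assume "x = \<alpha>"
          then have "le \<alpha> (lm le g')" using that by simp
          then show False using lt gm \<alpha>_def mo_props(2)[OF mo] by blast
        qed
      qed
      show ?thesis using HR strict by blast
    qed
    show "\<exists>H r. Qinv q le F g H r \<and>
    (\<forall>j<length F. \<forall>\<beta>\<in>Poly_Mapping.keys (H j). le (\<beta> + lm le (F!j)) (lm le g)) \<and>
    (\<forall>\<beta>\<in>Poly_Mapping.keys r. le \<beta> (lm le g)) \<and>
    lm le g \<in> {lm le (H j) + lm le (F!j) | j. j < length F \<and> H j \<noteq> 0} \<union> (if r = 0 then {} else {lm le r})"
    proof (cases "properly_reducible_term q le F g \<alpha>")
      case True
      obtain fj where fjF: "fj \<in> set F" and dv: "mon_dvd (lm le fj) \<alpha>"
        and un: "Rq_unit q ((lcm_paper c (lc le fj) div c) mod q)"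
        using True by (auto simp: properly_reducible_term_def c_def)
      obtain j where j: "j < length F" "F ! j = fj" using fjF by (auto simp: in_set_conv_nth)
      obtain \<gamma> where \<gamma>: "\<alpha> = lm le fj + \<gamma>" using dv by (auto simp: mon_dvd_def)
      have \<alpha>\<gamma>: "\<gamma> + lm le fj = \<alpha>" using \<gamma> by (simp add: add.commute)
      have fjq: "in_Rq_poly q fj" and fj0: "fj \<noteq> 0" using FF fjF by auto
      define lj where "lj = lc le fj"
      have lj0: "lj \<noteq> 0" using lm_props(1)[OF mo fj0] by (simp add: lj_def lc_def in_keys_iff)
      define gd where "gd = gcd c lj"
      have gd0: "gd \<noteq> 0" using c0 by (simp add: gd_def)
      have gdc: "gd dvd c" and gdl: "gd dvd lj" by (simp_all add: gd_def)
      have lcmeq: "lcm_paper c lj div c = lj div gd"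
      proof -
        have "lcm_paper c lj = c * (lj div gd)"
          unfolding lcm_paper_def gd_def[symmetric] using gdl by (simp add: div_mult_swap)
        then show ?thesis using c0 by simp
      qed
      define \<mu> where "\<mu> = (lj div gd) mod q"
      obtain v where v: "(\<mu> * v) mod q = 1" using un lcmeq by (auto simp: Rq_unit_def lj_def \<mu>_def)
      define t where "t = (v * (c div gd)) mod q"
      have tlj: "(t * lj) mod q = c"
      proof -
        have "(c div gd) * lj = c * (lj div gd)" using gdc gdl
          by (metis dvd_div_mult div_mult_swap mult.commute)
        have "(t * lj) mod q = (v * ((c div gd) * lj)) mod q"
          by (simp add: t_def mod_mult_left_eq mult.assoc)
        also have "\<dots> = (c * (v * (lj div gd))) mod q"
          using \<open>(c div gd) * lj = c * (lj div gd)\<close> by (simp add: ac_simps)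
        also have "\<dots> = (c * ((\<mu> * v) mod q)) mod q"
          by (simp add: \<mu>_def mod_mult_right_eq mod_mult_left_eq ac_simps)
        also have "\<dots> = c" using v cq by simp
        finally show ?thesis .
      qed
      have degc: "degree c < degree q"
        using cq c0 dq by (metis degree_mod_less' degree_0 not_gr_zero)
      have cd0: "c div gd \<noteq> 0" using c0 gdc by auto
      have degcd: "degree (c div gd) < degree q"
      proof -
        have "c = (c div gd) * gd" using gdc by simp
        then have "degree c = degree (c div gd) + degree gd"
          using cd0 gd0 by (metis degree_mult_eq)
        then show ?thesis using degc by simp
      qed
      have t0: "t \<noteq> 0"
      proof
        assume "t = 0"
        then have "(\<mu> * (v * (c div gd))) mod q = 0"
          by (metis t_def mod_mult_right_eq mult_zero_right mod_0)
        then have "(((\<mu> * v) mod q) * (c div gd)) mod q = 0"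
          by (metis mod_mult_left_eq mult.assoc)
        then have "(c div gd) mod q = 0" using v by simp
        moreover have "(c div gd) mod q = c div gd" using degcd by (rule mod_poly_less)
        ultimately show False using cd0 by simp
      qed
      have tq: "t mod q = t" by (simp add: t_def)
      define s where "s = Poly_Mapping.single \<gamma> t"
      define g' where "g' = sigma_q q (g - s * fj)"
      have lg': "Poly_Mapping.lookup g' \<beta> = (Poly_Mapping.lookup g \<beta> - Poly_Mapping.lookup (s * fj) \<beta>) mod q" for \<beta>
        by (simp add: g'_def sigma_lookup lookup_minus)
      have sfj\<alpha>: "Poly_Mapping.lookup (s * fj) \<alpha> = t * lj"
        using lookup_single_mult[of \<gamma> t fj "lm le fj"] \<alpha>\<gamma>
        by (simp add: s_def lj_def lc_def add.commute)
      have g'\<alpha>: "Poly_Mapping.lookup g' \<alpha> = 0"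
        using lg'[of \<alpha>] sfj\<alpha> tlj cq c_def by (metis mod_diff_eq diff_self mod_0)
      have g'q: "in_Rq_poly q g'" by (simp add: in_Rq_poly_def in_Rq_def lg')
      have sk: "Poly_Mapping.keys s \<subseteq> {\<gamma>}" by (simp add: s_def)
      have sfjk: "\<forall>\<beta>\<in>Poly_Mapping.keys (s * fj). le \<beta> \<alpha>"
      proof
        fix \<beta> assume "\<beta> \<in> Poly_Mapping.keys (s * fj)"
        then obtain b where b: "b \<in> Poly_Mapping.keys fj" "\<beta> = \<gamma> + b" using keys_mult[of s fj] sk by blast
        then have "le b (lm le fj)" using lm_props(2)[OF mo fj0] by blast
        then show "le \<beta> \<alpha>" using b mo_props(6)[OF mo] \<alpha>\<gamma> by metis
      qed
      have g'k: "\<forall>\<beta>\<in>Poly_Mapping.keys g'. le \<beta> \<alpha> \<and> \<beta> \<noteq> \<alpha>"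
      proof
        fix \<beta> assume b: "\<beta> \<in> Poly_Mapping.keys g'"
        have "\<beta> \<noteq> \<alpha>" using b g'\<alpha> by (auto simp: in_keys_iff)
        moreover have "\<beta> \<in> Poly_Mapping.keys g \<or> \<beta> \<in> Poly_Mapping.keys (s * fj)"
          using b by (auto simp: in_keys_iff lg')
        ultimately show "le \<beta> \<alpha> \<and> \<beta> \<noteq> \<alpha>" using gle sfjk by blast
      qed
      obtain H' r where HR: "Qinv q le F g' H' r"
        "\<forall>j<length F. \<forall>\<beta>\<in>Poly_Mapping.keys (H' j). le (\<beta> + lm le (F!j)) \<alpha> \<and> \<beta> + lm le (F!j) \<noteq> \<alpha>"
        "\<forall>\<beta>\<in>Poly_Mapping.keys r. le \<beta> \<alpha> \<and> \<beta> \<noteq> \<alpha>"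
        using sub[OF g'q g'k] by blast
      define H where "H = H'(j := H' j + s)"
      have H'\<gamma>: "Poly_Mapping.lookup (H' j) \<gamma> = 0"
      proof (rule ccontr)
        assume "Poly_Mapping.lookup (H' j) \<gamma> \<noteq> 0"
        then have "\<gamma> \<in> Poly_Mapping.keys (H' j)" by (simp add: in_keys_iff)
        then show False using HR(2) j \<alpha>\<gamma> by blast
      qed
      have lHj: "Poly_Mapping.lookup (H j) \<beta> = (if \<beta> = \<gamma> then t else Poly_Mapping.lookup (H' j) \<beta>)" for \<beta>
        by (simp add: H_def lookup_add s_def lookup_single when_def H'\<gamma>)
      have Hq: "\<forall>i. in_Rq_poly q (H i)"
      proof
        fix i show "in_Rq_poly q (H i)"
        proof (cases "i = j")
          case True
          then show ?thesis using HR(1) tq by (simp add: Qinv_def in_Rq_poly_def in_Rq_def lHj)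
        next
          case False
          then show ?thesis using HR(1) by (simp add: Qinv_def H_def)
        qed
      qed
      have eq: "Poly_Mapping.lookup g \<beta> =
          ((\<Sum>i<length F. Poly_Mapping.lookup (H i * F!i) \<beta>) + Poly_Mapping.lookup r \<beta>) mod q" for \<beta>
      proof -
        define X where "X = (\<Sum>i<length F. Poly_Mapping.lookup (H' i * F!i) \<beta>)"
        have sumeq: "(\<Sum>i<length F. Poly_Mapping.lookup (H i * F!i) \<beta>) = X + Poly_Mapping.lookup (s * fj) \<beta>"
          unfolding X_def
          by (rule sum_upd[OF j(1)]) (simp_all add: H_def j(2) distrib_right lookup_add)
        have e1: "(Poly_Mapping.lookup g \<beta> - Poly_Mapping.lookup (s * fj) \<beta>) mod q = (X + Poly_Mapping.lookup r \<beta>) mod q"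
          using HR(1) lg'[of \<beta>] by (simp add: Qinv_def X_def)
        have "Poly_Mapping.lookup g \<beta> = Poly_Mapping.lookup g \<beta> mod q"
          using gq by (simp add: in_Rq_poly_def in_Rq_def)
        also have "\<dots> = ((Poly_Mapping.lookup g \<beta> - Poly_Mapping.lookup (s * fj) \<beta>) mod q + Poly_Mapping.lookup (s * fj) \<beta>) mod q"
          by (simp add: mod_add_left_eq)
        also have "\<dots> = ((X + Poly_Mapping.lookup r \<beta>) mod q + Poly_Mapping.lookup (s * fj) \<beta>) mod q"
          using e1 by simp
        also have "\<dots> = (X + Poly_Mapping.lookup (s * fj) \<beta> + Poly_Mapping.lookup r \<beta>) mod q"
          by (simp add: mod_add_left_eq mod_add_right_eq add.assoc add.left_commute add.commute)
        finally show ?thesis using sumeq by simp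
      qed
      have Hk: "\<forall>i<length F. \<forall>\<beta>\<in>Poly_Mapping.keys (H i). le (\<beta> + lm le (F!i)) \<alpha>"
      proof (intro allI impI ballI)
        fix i \<beta> assume i: "i < length F" and b: "\<beta> \<in> Poly_Mapping.keys (H i)"
        show "le (\<beta> + lm le (F!i)) \<alpha>"
        proof (cases "i = j")
          case True
          then show ?thesis using b HR(2) j mo_props(1)[OF mo] \<alpha>\<gamma>
            by (auto simp: in_keys_iff lHj split: if_splits)
        next
          case False
          then show ?thesis using b HR(2) i by (auto simp: H_def)
        qed
      qed
      have Hj0: "H j \<noteq> 0" using lHj[of \<gamma>] t0 by auto
      have lmH: "lm le (H j) = \<gamma>"
      proof (rule lm_eqI[OF mo])
        show "\<gamma> \<in> Poly_Mapping.keys (H j)" using t0 by (simp add: in_keys_iff lHj)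
        show "\<forall>b\<in>Poly_Mapping.keys (H j). le b \<gamma>"
        proof
          fix b assume b: "b \<in> Poly_Mapping.keys (H j)"
          show "le b \<gamma>"
          proof (cases "b = \<gamma>")
            case True then show ?thesis using mo_props(1)[OF mo] by simp
          next
            case False
            then have "b \<in> Poly_Mapping.keys (H' j)" using b by (simp add: in_keys_iff lHj)
            then have hb: "le (b + lm le fj) \<alpha>" "b + lm le fj \<noteq> \<alpha>" using HR(2) j by auto
            show ?thesis
            proof (rule ccontr)
              assume "\<not> le b \<gamma>"
              then have "le \<gamma> b" using mo_props(4)[OF mo] by blast
              then have "le \<alpha> (b + lm le fj)" using mo_props(5)[OF mo] \<alpha>\<gamma> by metis
              then show False using hb mo_props(2)[OF mo] by blast
            qed
          qed
        qed
      qed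
      have inS: "\<alpha> \<in> {lm le (H i) + lm le (F!i) | i. i < length F \<and> H i \<noteq> 0}"
        using j Hj0 lmH \<alpha>\<gamma> by auto
      show ?thesis
        apply (rule exI[of _ H], rule exI[of _ r])
        using HR(1,3) Hq eq Hk inS \<alpha>_def by (auto simp: Qinv_def)
    next
      case False
      define s where "s = Poly_Mapping.single \<alpha> c"
      define g' where "g' = g - s"
      have ls: "Poly_Mapping.lookup s \<beta> = (if \<beta> = \<alpha> then c else 0)" for \<beta>
        by (simp add: s_def lookup_single when_def)
      have lg': "Poly_Mapping.lookup g' \<beta> = (if \<beta> = \<alpha> then 0 else Poly_Mapping.lookup g \<beta>)" for \<beta>
        by (simp add: g'_def lookup_minus ls c_def)
      have g'q: "in_Rq_poly q g'" using gq by (simp add: in_Rq_poly_def in_Rq_def lg')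
      have g'k: "\<forall>\<beta>\<in>Poly_Mapping.keys g'. le \<beta> \<alpha> \<and> \<beta> \<noteq> \<alpha>"
        using gle by (auto simp: in_keys_iff lg' split: if_splits)
      obtain H r' where HR: "Qinv q le F g' H r'"
        "\<forall>j<length F. \<forall>\<beta>\<in>Poly_Mapping.keys (H j). le (\<beta> + lm le (F!j)) \<alpha> \<and> \<beta> + lm le (F!j) \<noteq> \<alpha>"
        "\<forall>\<beta>\<in>Poly_Mapping.keys r'. le \<beta> \<alpha> \<and> \<beta> \<noteq> \<alpha>"
        using sub[OF g'q g'k] by blast
      define r where "r = r' + s"
      have r'\<alpha>: "Poly_Mapping.lookup r' \<alpha> = 0" using HR(3) by (auto simp: in_keys_iff)
      have lr: "Poly_Mapping.lookup r \<beta> = (if \<beta> = \<alpha> then c else Poly_Mapping.lookup r' \<beta>)" for \<beta>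
        by (simp add: r_def lookup_add ls r'\<alpha>)
      have rq: "in_Rq_poly q r" using HR(1) cq by (simp add: Qinv_def in_Rq_poly_def in_Rq_def lr)
      have rred: "properly_reduced q le F r"
        unfolding properly_reduced_def
      proof
        fix \<beta>
        show "\<not> properly_reducible_term q le F r \<beta>"
        proof (cases "\<beta> = \<alpha>")
          case True
          then show ?thesis using False prt_cong[of r \<beta> g] lr c_def by simp
        next
          case False
          then show ?thesis using HR(1) prt_cong[of r \<beta> r'] lr
            by (simp add: Qinv_def properly_reduced_def)
        qed
      qed
      have eq: "Poly_Mapping.lookup g \<beta> =
          ((\<Sum>j<length F. Poly_Mapping.lookup (H j * F!j) \<beta>) + Poly_Mapping.lookup r \<beta>) mod q" for \<beta>
      proof -
        define X where "X = (\<Sum>j<length F. Poly_Mapping.lookup (H j * F!j) \<beta>)"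
        have e1: "Poly_Mapping.lookup g' \<beta> = (X + Poly_Mapping.lookup r' \<beta>) mod q"
          using HR(1) by (simp add: Qinv_def X_def)
        have gb: "Poly_Mapping.lookup g \<beta> = Poly_Mapping.lookup g' \<beta> + Poly_Mapping.lookup s \<beta>"
          by (simp add: g'_def lookup_minus)
        have rb: "Poly_Mapping.lookup r \<beta> = Poly_Mapping.lookup r' \<beta> + Poly_Mapping.lookup s \<beta>"
          by (simp add: r_def lookup_add)
        have "Poly_Mapping.lookup g \<beta> = Poly_Mapping.lookup g \<beta> mod q"
          using gq by (simp add: in_Rq_poly_def in_Rq_def)
        also have "\<dots> = ((X + Poly_Mapping.lookup r' \<beta>) mod q + Poly_Mapping.lookup s \<beta>) mod q"
          using gb e1 by simp
        also have "\<dots> = (X + Poly_Mapping.lookup r \<beta>) mod q"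
          by (simp add: rb mod_add_left_eq add.assoc)
        finally show ?thesis by (simp add: X_def)
      qed
      have r0: "r \<noteq> 0" using lr[of \<alpha>] c0 by auto
      have rk: "\<forall>\<beta>\<in>Poly_Mapping.keys r. le \<beta> \<alpha>"
        using HR(3) mo_props(1)[OF mo] by (auto simp: in_keys_iff lr split: if_splits)
      have lmr: "lm le r = \<alpha>"
        by (rule lm_eqI[OF mo]) (use rk lr c0 in \<open>auto simp: in_keys_iff\<close>)
      show ?thesis
        apply (rule exI[of _ H], rule exI[of _ r])
        using HR(1,2) rq rred eq rk r0 lmr \<alpha>_def by (auto simp: Qinv_def)
    qed
  qed
qed

lemma Rq_eq:
  fixes q :: "'a::field_gcd poly" and F :: "('v, 'a) mpoly list"
  assumes "\<forall>\<beta>. Poly_Mapping.lookup f \<beta> =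
       ((\<Sum>j<length F. Poly_Mapping.lookup (H j * F!j) \<beta>) + Poly_Mapping.lookup r \<beta>) mod q"
    and "in_Rq_poly q f"
  shows "Rq_scale q 1 f =
      Rq_add q (sigma_q q (\<Sum>j<length F. Rq_mult q (map H [0..<length F] ! j) (F ! j))) r"
proof (rule poly_mapping_eqI)
  fix \<beta>
  have l: "Poly_Mapping.lookup (Rq_scale q 1 f) \<beta> = Poly_Mapping.lookup f \<beta>"
    using assms(2) by (simp add: Rq_scale_def sigma_lookup map.rep_eq when_def in_Rq_poly_def in_Rq_def)
  have s: "(\<Sum>j<length F. Poly_Mapping.lookup (Rq_mult q (map H [0..<length F] ! j) (F ! j)) \<beta>)
     = (\<Sum>j<length F. Poly_Mapping.lookup (H j * F!j) \<beta> mod q)"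
    by (intro sum.cong) (auto simp: Rq_mult_def sigma_lookup)
  show "Poly_Mapping.lookup (Rq_scale q 1 f) \<beta> =
     Poly_Mapping.lookup (Rq_add q (sigma_q q (\<Sum>j<length F. Rq_mult q (map H [0..<length F] ! j) (F ! j))) r) \<beta>"
  proof -
    have "Poly_Mapping.lookup (Rq_add q (sigma_q q (\<Sum>j<length F. Rq_mult q (map H [0..<length F] ! j) (F ! j))) r) \<beta>
      = ((\<Sum>j<length F. Poly_Mapping.lookup (H j * F!j) \<beta> mod q) mod q + Poly_Mapping.lookup r \<beta>) mod q"
      unfolding Rq_add_def sigma_lookup lookup_add lookup_sum s by (simp add: mod_add_left_eq)
    also have "\<dots> = ((\<Sum>j<length F. Poly_Mapping.lookup (H j * F!j) \<beta>) + Poly_Mapping.lookup r \<beta>) mod q"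
      by (simp add: mod_sum_eq mod_add_left_eq)
    finally show ?thesis unfolding l using assms(1) by simp
  qed
qed

theorem theorem5p3:
  fixes q :: "'a::field_gcd poly"
    and le :: "('v::finite \<Rightarrow>\<^sub>0 nat) \<Rightarrow> ('v \<Rightarrow>\<^sub>0 nat) \<Rightarrow> bool"
    and F :: "('v, 'a) mpoly list"
    and f :: "('v, 'a) mpoly"
  assumes "monomial_order le"
    and "degree q > 0"
    and "\<forall>fj \<in> set F. in_Rq_poly q fj \<and> \<not> Poly_Mapping.keys fj \<subseteq> {0}"
    and "in_Rq_poly q f"
  shows "\<exists>lam r hs.
           Rq_unit q lam \<and> in_Rq_poly q r \<and> properly_reduced q le F r \<and>
           length hs = length F \<and> (\<forall>h \<in> set hs. in_Rq_poly q h) \<and>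
           Rq_scale q lam f =
             Rq_add q (sigma_q q (\<Sum>j<length F. Rq_mult q (hs ! j) (F ! j))) r \<and>
           (f \<noteq> 0 \<longrightarrow>
              (let S = {lm le (hs ! j) + lm le (F ! j) | j. j < length F \<and> hs ! j \<noteq> 0}
                       \<union> (if r = 0 then {} else {lm le r})
               in lm le f \<in> S \<and> (\<forall>\<beta> \<in> S. le \<beta> (lm le f))))"
proof -
  have FF: "\<forall>fj\<in>set F. in_Rq_poly q fj \<and> fj \<noteq> 0" using assms(3) by fastforce
  have one: "(1::'a poly) mod q = 1" by (rule mod_poly_less) (use assms(2) in simp)
  have u: "Rq_unit q 1"
    unfolding Rq_unit_def in_Rq_def using one by (intro conjI exI[of _ 1]) simp_all
  obtain H r where HR: "Qinv q le F f H r"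
    "f \<noteq> 0 \<Longrightarrow> (\<forall>j<length F. \<forall>\<beta>\<in>Poly_Mapping.keys (H j). le (\<beta> + lm le (F!j)) (lm le f)) \<and>
    (\<forall>\<beta>\<in>Poly_Mapping.keys r. le \<beta> (lm le f)) \<and>
    lm le f \<in> {lm le (H j) + lm le (F!j) | j. j < length F \<and> H j \<noteq> 0} \<union> (if r = 0 then {} else {lm le r})"
  proof (cases "f = 0")
    case True
    have "Qinv q le F f (\<lambda>_. 0) 0"
      using True reduced_zero by (simp add: Qinv_def in_Rq_poly_def in_Rq_def)
    then show ?thesis using that True by blast
  next
    case False
    then show ?thesis using that main[OF assms(1,2) FF, rule_format, OF refl assms(4) False] by blast
  qed
  define hs where "hs = map H [0..<length F]"
  have hsj: "j < length F \<Longrightarrow> hs ! j = H j" for j by (simp add: hs_def)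
  have Sx: "{lm le (hs ! j) + lm le (F ! j) | j. j < length F \<and> hs ! j \<noteq> 0}
      = {lm le (H j) + lm le (F ! j) | j. j < length F \<and> H j \<noteq> 0}"
  proof (rule Collect_cong)
    fix x
    show "(\<exists>j. x = lm le (hs ! j) + lm le (F ! j) \<and> j < length F \<and> hs ! j \<noteq> 0) =
          (\<exists>j. x = lm le (H j) + lm le (F ! j) \<and> j < length F \<and> H j \<noteq> 0)"
      using hsj by (intro ex_cong1) auto
  qed
  show ?thesis
  proof (intro exI conjI)
    show "Rq_unit q 1" by (rule u)
    show "in_Rq_poly q r" "properly_reduced q le F r" using HR(1) by (simp_all add: Qinv_def)
    show "length hs = length F" by (simp add: hs_def)
    show "\<forall>h\<in>set hs. in_Rq_poly q h" using HR(1) by (auto simp: hs_def Qinv_def)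
    show "Rq_scale q 1 f = Rq_add q (sigma_q q (\<Sum>j<length F. Rq_mult q (hs ! j) (F ! j))) r"
      unfolding hs_def by (rule Rq_eq) (use HR(1) assms(4) in \<open>simp_all add: Qinv_def\<close>)
    show "f \<noteq> 0 \<longrightarrow>
              (let S = {lm le (hs ! j) + lm le (F ! j) | j. j < length F \<and> hs ! j \<noteq> 0}
                       \<union> (if r = 0 then {} else {lm le r})
               in lm le f \<in> S \<and> (\<forall>\<beta> \<in> S. le \<beta> (lm le f)))"
    proof
      assume f0: "f \<noteq> 0"
      note B = HR(2)[OF f0]
      have "\<forall>\<beta> \<in> {lm le (H j) + lm le (F ! j) | j. j < length F \<and> H j \<noteq> 0}. le \<beta> (lm le f)"
        using B lm_props(1)[OF assms(1)] by blast
      moreover have "\<forall>\<beta> \<in> (if r = 0 then {} else {lm le r}). le \<beta> (lm le f)"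
        using B lm_props(1)[OF assms(1)] by auto
      ultimately show "let S = {lm le (hs ! j) + lm le (F ! j) | j. j < length F \<and> hs ! j \<noteq> 0}
                       \<union> (if r = 0 then {} else {lm le r})
               in lm le f \<in> S \<and> (\<forall>\<beta> \<in> S. le \<beta> (lm le f))"
        unfolding Sx Let_def using B by blast
    qed
  qed
qed

end
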